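(* Let $m>0$ and let $f:\mathbb R^d\to\mathbb R$ be continuously differentiable and $m$-strongly convex with minimizer $x^\star$ (no Lipschitz assumption on $\nabla f$ is required). Let $\bar b>0$ and let $x(t)$, $t\ge0$, solve $\ddot x+\bar b\sqrt m\,\dot x+\nabla f(x)=0$. Set $$\bar\Xi(\bar r,\bar b)=\bar r\bar b^2-2(\bar r^2+1)\bar b+\bar r^3+3\bar r.$$ Then there is a unique real $\bar r$ with $\bar\Xi(\bar r,\bar b)=0$; it satisfies $0<\bar r\le1$, with $\bar r=1$ if and only if $\bar b=2$. Let $\lambda=\sqrt m\,\bar r$ and $v=\dot x/\sqrt m$. Then the function $$t\mapsto e^{\lambda t}\Big(f(x(t))-f(x^\star)+\tfrac m2\big\|v(t)+\bar r(x(t)-x^\star)\big\|^2\Big)$$ is nonincreasing on $[0,\infty)$; consequently $f(x(t))-f(x^\star)\le\bar Ce^{-\lambda t}$ with $$\bar C=f(x(0))-f(x^\star)+\frac m2\Big\|\frac1{\sqrt m}\dot x(0)+\bar r(x(0)-x^\star)\Big\|^2.$$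
   Context: $f$ is $m$-strongly convex if $f(y)\ge f(x)+\nabla f(x)^T(y-x)+\frac m2\|y-x\|^2$ for all $x,y$. The quadratic term equals $(\xi-\xi^\star)^T(\widehat{\bar P}\otimes I_d)(\xi-\xi^\star)$ with $\xi=(v,x)$, $\xi^\star=(0,x^\star)$, $\widehat{\bar P}=\frac m2\begin{pmatrix}1&\bar r\\ \bar r&\bar r^2\end{pmatrix}$. *)

theory Defs
  imports "HOL-Analysis.Analysis"
begin

definition strongly_convex_grad :: "real \<Rightarrow> ('a::real_inner \<Rightarrow> real) \<Rightarrow> ('a \<Rightarrow> 'a) \<Rightarrow> bool" where
  "strongly_convex_grad m f g \<longleftrightarrow>
     (\<forall>x y. f y \<ge> f x + g x \<bullet> (y - x) + m / 2 * (norm (y - x))\<^sup>2)"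

definition Xi_bar :: "real \<Rightarrow> real \<Rightarrow> real" where
  "Xi_bar r b = r * b\<^sup>2 - 2 * (r\<^sup>2 + 1) * b + r ^ 3 + 3 * r"

end

theory Submission
  imports Defs
begin



lemma xi_factor: "r * Xi_bar r b = (r*b - r^2 - 1)^2 + r^2 - 1"
  unfolding Xi_bar_def by (simp add: power2_eq_square power3_eq_cube algebra_simps)

lemma xi_diff: "Xi_bar s b - Xi_bar r b = (s - r) * ((b - s - r)^2 - s*r + 3)"
  unfolding Xi_bar_def by (simp add: power2_eq_square power3_eq_cube algebra_simps)

lemma xi_pos_root: assumes "Xi_bar r b = 0" "b > 0" shows "0 < r \<and> r \<le> 1"
proof
  show "0 < r"
  proof (rule ccontr)
    assume "\<not> 0 < r"
    hence "r * (r-b)^2 \<le> 0" by (simp add: mult_nonpos_nonneg)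
    moreover have "Xi_bar r b = r * (r-b)^2 + 3*r - 2*b"
      unfolding Xi_bar_def by (simp add: power2_eq_square power3_eq_cube algebra_simps)
    ultimately show False using assms \<open>\<not> 0 < r\<close> by linarith
  qed
  show "r \<le> 1"
  proof (rule ccontr)
    assume "\<not> r \<le> 1"
    hence "r^2 > 1" by (simp add: one_less_power)
    hence "r * Xi_bar r b > 0" unfolding xi_factor by (smt (verit) zero_le_power2)
    thus False using assms by simp
  qed
qed

lemma xi_unique: assumes "Xi_bar r b = 0" "Xi_bar s b = 0" "b > 0" shows "r = s"
proof -
  from xi_pos_root[OF assms(1,3)] xi_pos_root[OF assms(2,3)]
  have "s * r \<le> 1" by (simp add: mult_le_one)
  hence "(b - s - r)^2 - s*r + 3 > 0" by (smt (verit) zero_le_power2)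
  moreover have "(s - r) * ((b - s - r)^2 - s*r + 3) = 0" using xi_diff[of s b r] assms by simp
  ultimately show ?thesis by simp
qed

lemma xi_exists: assumes "b > 0" shows "\<exists>r. Xi_bar r b = 0"
proof -
  have c: "continuous_on {0..1} (\<lambda>r. Xi_bar r b)" unfolding Xi_bar_def by (intro continuous_intros)
  have "Xi_bar 0 b \<le> 0" using assms by (simp add: Xi_bar_def)
  moreover have "Xi_bar 1 b \<ge> 0"
  proof -
    have "Xi_bar 1 b = (b-2)^2" by (simp add: Xi_bar_def power2_eq_square algebra_simps)
    thus ?thesis by simp
  qed
  ultimately obtain r where "r \<in> {0..1}" "Xi_bar r b = 0"
    using IVT'[of "\<lambda>r. Xi_bar r b" 0 0 1] c by auto
  thus ?thesis by blast
qed

lemma xi_one: assumes "Xi_bar r b = 0" "b > 0" shows "r = 1 \<longleftrightarrow> b = 2"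
proof
  assume "r = 1"
  hence "(b-2)^2 = 0" using assms by (simp add: Xi_bar_def power2_eq_square algebra_simps)
  thus "b = 2" by simp
next
  assume "b = 2"
  hence "Xi_bar 1 b = 0" by (simp add: Xi_bar_def)
  thus "r = 1" using xi_unique assms by blast
qed



lemma quad_le:
  fixes e v :: "'a::real_inner"
  assumes p: "p \<ge> 0" and q: "q \<ge> 0" and B: "B^2 = 4*p*q"
  shows "B * (e \<bullet> v) \<le> p * (e \<bullet> e) + q * (v \<bullet> v)"
proof (cases "p = 0")
  case True
  hence "B = 0" using B by simp
  thus ?thesis using p q by (simp add: True)
next
  case False
  hence pp: "p > 0" using p by simp
  have "0 \<le> (p *\<^sub>R e - (B/2) *\<^sub>R v) \<bullet> (p *\<^sub>R e - (B/2) *\<^sub>R v)" by simp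
  also have "\<dots> = p^2 * (e \<bullet> e) - p * B * (e \<bullet> v) + B^2/4 * (v \<bullet> v)"
    by (simp add: inner_diff_left inner_diff_right inner_commute power2_eq_square algebra_simps)
  also have "\<dots> = p * (p * (e \<bullet> e) - B * (e \<bullet> v) + q * (v \<bullet> v))"
    using B by (simp add: power2_eq_square algebra_simps)
  finally have "0 \<le> p * (p * (e \<bullet> e) - B * (e \<bullet> v) + q * (v \<bullet> v))" .
  hence "0 \<le> p * (e \<bullet> e) - B * (e \<bullet> v) + q * (v \<bullet> v)" using pp
    by (simp add: zero_le_mult_iff)
  thus ?thesis by simp
qed

lemma Q_le:
  fixes e v :: "'a::real_inner"
  assumes xi: "Xi_bar r b = 0" and b: "b > 0"
  shows "(r^3 - r)/2 * (e \<bullet> e) + (3*r/2 - b) * (v \<bullet> v) + (2*r^2 - r*b) * (e \<bullet> v) \<le> 0"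
proof -
  from xi_pos_root[OF xi b] have r: "0 < r" "r \<le> 1" by auto
  define p where "p = (r - r^3)/2"
  define q where "q = b - 3*r/2"
  define B where "B = 2*r^2 - r*b"
  have p0: "p \<ge> 0" unfolding p_def using r
    by (simp add: power3_eq_cube mult_le_one)
  have BB: "B^2 = 4*p*q"
  proof -
    have "B^2 - 4*p*q = r * Xi_bar r b" unfolding B_def p_def q_def Xi_bar_def
      by (simp add: power2_eq_square power3_eq_cube field_simps)
    thus ?thesis using xi by simp
  qed
  have q0: "q \<ge> 0"
  proof (cases "p = 0")
    case True
    hence "r^3 = r" unfolding p_def by simp
    hence "r = 1" using r by (auto simp: power3_eq_cube square_eq_1_iff)
    hence "b = 2" using xi_one[OF xi b] by simp
    thus ?thesis unfolding q_def using \<open>r = 1\<close> by simp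
  next
    case False
    hence "p > 0" using p0 by simp
    moreover have "4*p*q \<ge> 0" using BB[symmetric] by simp
    ultimately show ?thesis by (simp add: zero_le_mult_iff)
  qed
  have H: "B * (e \<bullet> v) \<le> p * (e \<bullet> e) + q * (v \<bullet> v)" using quad_le[OF p0 q0 BB] .
  have e1: "(r^3 - r)/2 = -p" "3*r/2 - b = -q" "2*r^2 - r*b = B" unfolding p_def q_def B_def by (auto simp: field_simps)
  show ?thesis unfolding e1 using H by linarith
qed



lemma t1:
  fixes e X' X'' G :: "'a::real_inner"
  assumes c: "c > 0" and ode: "X'' + (b*c) *\<^sub>R X' + G = 0"
  defines "v \<equiv> (1/c) *\<^sub>R X'"
  shows "X' = c *\<^sub>R v" "(1/c) *\<^sub>R X'' + r *\<^sub>R X' = (r*c - b*c) *\<^sub>R v - (1/c) *\<^sub>R G"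
proof -
  show X': "X' = c *\<^sub>R v" unfolding v_def using c by simp
  have X'': "X'' = - ((b*c) *\<^sub>R X' + G)"
  proof -
    have "X'' = (X'' + (b*c) *\<^sub>R X' + G) - ((b*c) *\<^sub>R X' + G)" by (simp add: algebra_simps)
    thus ?thesis using ode by simp
  qed
  have "(1/c) *\<^sub>R X'' = (- b*c) *\<^sub>R v - (1/c) *\<^sub>R G"
    unfolding X'' apply (subst X') using c by (simp add: scaleR_add_right scaleR_minus_right scaleR_diff_right)
  moreover have "r *\<^sub>R X' = (r*c) *\<^sub>R v" by (subst X') simp
  ultimately show "(1/c) *\<^sub>R X'' + r *\<^sub>R X' = (r*c - b*c) *\<^sub>R v - (1/c) *\<^sub>R G"
    by (simp add: algebra_simps)
qed

lemma key:
  fixes e X' X'' G :: "'a::real_inner"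
  assumes c: "c > 0" and xi: "Xi_bar r b = 0" and b: "b > 0"
    and F: "F \<le> G \<bullet> e - c^2/2 * (e \<bullet> e)"
    and ode: "X'' + (b*c) *\<^sub>R X' + G = 0"
  shows "(c*r) * (F + c^2/2 * ((((1/c) *\<^sub>R X' + r *\<^sub>R e)) \<bullet> ((1/c) *\<^sub>R X' + r *\<^sub>R e)))
     + (G \<bullet> X' + c^2/2 * (((1/c) *\<^sub>R X'' + r *\<^sub>R X') \<bullet> ((1/c) *\<^sub>R X' + r *\<^sub>R e)
         + ((1/c) *\<^sub>R X' + r *\<^sub>R e) \<bullet> ((1/c) *\<^sub>R X'' + r *\<^sub>R X'))) \<le> 0"
proof -
  from xi_pos_root[OF xi b] have r: "0 < r" "r \<le> 1" by auto
  define v where "v = (1/c) *\<^sub>R X'"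
  note T = t1[OF c ode, folded v_def]
  have Q: "(r^3 - r)/2 * (e \<bullet> e) + (3*r/2 - b) * (v \<bullet> v) + (2*r^2 - r*b) * (e \<bullet> v) \<le> 0"
    using Q_le[OF xi b] .
  have GX: "G \<bullet> X' = c * (G \<bullet> v)" by (subst T(1)) simp
  have id: "(c*r) * (F + c^2/2 * ((((1/c) *\<^sub>R X' + r *\<^sub>R e)) \<bullet> ((1/c) *\<^sub>R X' + r *\<^sub>R e)))
     + (G \<bullet> X' + c^2/2 * (((1/c) *\<^sub>R X'' + r *\<^sub>R X') \<bullet> ((1/c) *\<^sub>R X' + r *\<^sub>R e)
         + ((1/c) *\<^sub>R X' + r *\<^sub>R e) \<bullet> ((1/c) *\<^sub>R X'' + r *\<^sub>R X')))
    = c^3 * ((r^3 - r)/2 * (e \<bullet> e) + (3*r/2 - b) * (v \<bullet> v) + (2*r^2 - r*b) * (e \<bullet> v))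
      + c*r*(F - G \<bullet> e + c^2/2 * (e \<bullet> e))"
    unfolding T(2) GX v_def[symmetric]
    apply (simp add: inner_add_left inner_add_right inner_diff_left inner_diff_right inner_commute[of G] inner_commute[of e v])
    using c apply (simp add: power2_eq_square power3_eq_cube field_simps)
    done
  have "c^3 * ((r^3 - r)/2 * (e \<bullet> e) + (3*r/2 - b) * (v \<bullet> v) + (2*r^2 - r*b) * (e \<bullet> v)) \<le> 0"
    using Q c by (simp add: mult_nonneg_nonpos)
  moreover have "c*r*(F - G \<bullet> e + c^2/2 * (e \<bullet> e)) \<le> 0"
    using F c r by (simp add: mult_nonneg_nonpos)
  ultimately show ?thesis unfolding id by linarith
qed



lemma ww_deriv:
  fixes w :: "real \<Rightarrow> 'a::real_inner"
  assumes "(w has_vector_derivative w') (at t within S)"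
  shows "((\<lambda>t. w t \<bullet> w t) has_real_derivative (w' \<bullet> w t + w t \<bullet> w')) (at t within S)"
proof -
  have d: "(w has_derivative (\<lambda>h. h *\<^sub>R w')) (at t within S)" using assms by (simp add: has_vector_derivative_def)
  have "((\<lambda>t. w t \<bullet> w t) has_derivative (\<lambda>h. w t \<bullet> (h *\<^sub>R w') + (h *\<^sub>R w') \<bullet> w t)) (at t within S)"
    by (rule has_derivative_inner[OF d d])
  then show ?thesis unfolding has_field_derivative_def
    by (rule has_derivative_eq_rhs) (auto simp: algebra_simps)
qed

lemma fx_deriv:
  fixes f :: "'a::real_inner \<Rightarrow> real"
  assumes grad: "\<And>y. (f has_derivative (\<lambda>h. g y \<bullet> h)) (at y)"
    and dx: "(x has_vector_derivative x') (at t within S)"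
  shows "((\<lambda>t. f (x t)) has_real_derivative (g (x t) \<bullet> x')) (at t within S)"
proof -
  have d: "(x has_derivative (\<lambda>h. h *\<^sub>R x')) (at t within S)" using dx by (simp add: has_vector_derivative_def)
  have "((f \<circ> x) has_derivative ((\<lambda>h. g (x t) \<bullet> h) \<circ> (\<lambda>h. h *\<^sub>R x'))) (at t within S)"
    by (rule diff_chain_within[OF d has_derivative_at_withinI[OF grad]])
  then have "((\<lambda>t. f (x t)) has_derivative (\<lambda>h. g (x t) \<bullet> (h *\<^sub>R x'))) (at t within S)"
    by (simp add: comp_def)
  then show ?thesis unfolding has_field_derivative_def
    by (rule has_derivative_eq_rhs) (auto simp: fun_eq_iff)
qed

lemma hvd_cmul:
  "(f has_vector_derivative f') F \<Longrightarrow> ((\<lambda>x. c *\<^sub>R f x) has_vector_derivative (c *\<^sub>R f')) F"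
  by (rule bounded_linear.has_vector_derivative[OF bounded_linear_scaleR_right])

lemma at_pos: "(y::real) > 0 \<Longrightarrow> at y within {0..} = at y"
  by (rule at_within_interior) (simp add: interior_Ici[of "-1"])




theorem theorem5:
  fixes f :: "'a::euclidean_space \<Rightarrow> real" and g :: "'a \<Rightarrow> 'a"
    and m b :: real and xs :: 'a
    and x x' x'' :: "real \<Rightarrow> 'a"
  assumes m_pos: "m > 0"
    and grad: "\<And>y. (f has_derivative (\<lambda>h. g y \<bullet> h)) (at y)"
    and grad_cont: "continuous_on UNIV g"
    and sconv: "strongly_convex_grad m f g"
    and minimizer: "\<And>y. f xs \<le> f y"
    and b_pos: "b > 0"
    and dx: "\<And>t. t \<ge> 0 \<Longrightarrow> (x has_vector_derivative x' t) (at t within {0..})"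
    and ddx: "\<And>t. t \<ge> 0 \<Longrightarrow> (x' has_vector_derivative x'' t) (at t within {0..})"
    and ode: "\<And>t. t \<ge> 0 \<Longrightarrow> x'' t + (b * sqrt m) *\<^sub>R x' t + g (x t) = 0"
  shows "(\<exists>!r. Xi_bar r b = 0) \<and>
    (\<forall>r. Xi_bar r b = 0 \<longrightarrow>
       0 < r \<and> r \<le> 1 \<and> (r = 1 \<longleftrightarrow> b = 2) \<and>
       (let lam = sqrt m * r;
            v = (\<lambda>t. (1 / sqrt m) *\<^sub>R x' t);
            C = f (x 0) - f xs + m / 2 * (norm ((1 / sqrt m) *\<^sub>R x' 0 + r *\<^sub>R (x 0 - xs)))\<^sup>2
        in antimono_on {0..} (\<lambda>t. exp (lam * t) *
               (f (x t) - f xs + m / 2 * (norm (v t + r *\<^sub>R (x t - xs)))\<^sup>2))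
           \<and> (\<forall>t\<ge>0. f (x t) - f xs \<le> C * exp (- lam * t))))"
proof (intro conjI allI impI)
  show "\<exists>!r. Xi_bar r b = 0" using xi_exists[OF b_pos] xi_unique[OF _ _ b_pos] by blast
next
  fix r assume xi: "Xi_bar r b = 0"
  from xi_pos_root[OF xi b_pos] show "0 < r" "r \<le> 1" by auto
  from xi_one[OF xi b_pos] show "r = 1 \<longleftrightarrow> b = 2" .
  have r: "0 < r" "r \<le> 1" using xi_pos_root[OF xi b_pos] by auto
  define c where "c = sqrt m"
  have c: "c > 0" unfolding c_def using m_pos by simp
  have cm: "c^2 = m" unfolding c_def using m_pos by simp
  define w where "w t = (1/c) *\<^sub>R x' t + r *\<^sub>R (x t - xs)" for t
  define w' where "w' t = (1/c) *\<^sub>R x'' t + r *\<^sub>R x' t" for t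
  define E where "E t = f (x t) - f xs + m/2 * (w t \<bullet> w t)" for t
  define E' where "E' t = g (x t) \<bullet> x' t + m/2 * (w' t \<bullet> w t + w t \<bullet> w' t)" for t
  define \<phi> where "\<phi> t = exp (c*r*t) * E t" for t
  have wd: "(w has_vector_derivative w' t) (at t within {0..})" if t: "t \<ge> 0" for t
  proof -
    have d1: "((\<lambda>s. x s - xs) has_vector_derivative x' t) (at t within {0..})"
      using has_vector_derivative_diff[OF dx[OF t] has_vector_derivative_const[of xs]] by simp
    show ?thesis unfolding w_def[abs_def] w'_def
      by (intro has_vector_derivative_add hvd_cmul ddx t d1)
  qed
  have Ed: "(E has_real_derivative E' t) (at t within {0..})" if t: "t \<ge> 0" for t
  proof -
    have "((\<lambda>t. (f (x t) - f xs) + m/2 * (w t \<bullet> w t)) has_real_derivative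
        ((g (x t) \<bullet> x' t - 0) + m/2 * (w' t \<bullet> w t + w t \<bullet> w' t))) (at t within {0..})"
      by (intro DERIV_add DERIV_diff DERIV_cmult fx_deriv[OF grad dx[OF t]] ww_deriv[OF wd[OF t]] DERIV_const)
    thus ?thesis unfolding E_def[abs_def] E'_def by simp
  qed
  have phid: "(\<phi> has_real_derivative exp (c*r*t) * (c*r*E t + E' t)) (at t within {0..})" if t: "t \<ge> 0" for t
  proof -
    have ex: "((\<lambda>t. exp (c*r*t)) has_real_derivative exp (c*r*t) * (c*r)) (at t within {0..})"
      by (auto intro!: derivative_eq_intros)
    show ?thesis unfolding \<phi>_def[abs_def]
      by (rule DERIV_cong[OF DERIV_mult[OF ex Ed[OF t]]]) (simp add: algebra_simps)
  qed
  have neg: "c*r*E t + E' t \<le> 0" if t: "t \<ge> 0" for t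
  proof -
    have F: "f (x t) - f xs \<le> g (x t) \<bullet> (x t - xs) - c^2/2 * ((x t - xs) \<bullet> (x t - xs))"
    proof -
      have A: "f xs \<ge> f (x t) + g (x t) \<bullet> (xs - x t) + m / 2 * (norm (xs - x t))\<^sup>2"
        using sconv unfolding strongly_convex_grad_def by blast
      have e1: "g (x t) \<bullet> (xs - x t) = - (g (x t) \<bullet> (x t - xs))" by (simp add: inner_diff_right)
      have e2: "(norm (xs - x t))\<^sup>2 = (x t - xs) \<bullet> (x t - xs)"
        by (simp add: power2_norm_eq_inner[symmetric] norm_minus_commute)
      have "f xs \<ge> f (x t) + - (g (x t) \<bullet> (x t - xs)) + m / 2 * ((x t - xs) \<bullet> (x t - xs))"
        using A unfolding e1 e2 .
      thus ?thesis unfolding cm by linarith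
    qed
    have o: "x'' t + (b*c) *\<^sub>R x' t + g (x t) = 0" using ode[OF t] unfolding c_def .
    show ?thesis using key[OF c xi b_pos F o] unfolding E_def E'_def w_def w'_def cm .
  qed
  have phid2: "\<exists>y. (\<phi> has_real_derivative y) (at u) \<and> y \<le> 0" if "u > 0" for u
  proof -
    have "exp (c*r*u) * (c*r*E u + E' u) \<le> 0" using neg[of u] that by (simp add: mult_nonneg_nonpos)
    moreover have "(\<phi> has_real_derivative exp (c*r*u) * (c*r*E u + E' u)) (at u)"
      using phid[of u] that at_pos[OF that] by simp
    ultimately show ?thesis by blast
  qed
  have cont: "continuous_on {0..} \<phi>"
    unfolding continuous_on_eq_continuous_within using phid DERIV_continuous by fastforce
  have anti: "\<phi> t \<le> \<phi> s" if "0 \<le> s" "s \<le> t" for s t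
    by (rule DERIV_nonpos_imp_decreasing_open[OF that(2)])
       (use that phid2 in auto, rule continuous_on_subset[OF cont], use that in auto)
  have fe: "(\<lambda>t. exp (sqrt m * r * t) * (f (x t) - f xs + m / 2 *
      (norm ((\<lambda>t. (1 / sqrt m) *\<^sub>R x' t) t + r *\<^sub>R (x t - xs)))\<^sup>2)) = \<phi>"
    by (auto simp: fun_eq_iff \<phi>_def E_def w_def c_def power2_norm_eq_inner)
  have C: "f (x 0) - f xs + m / 2 * (norm ((1 / sqrt m) *\<^sub>R x' 0 + r *\<^sub>R (x 0 - xs)))\<^sup>2 = \<phi> 0"
    by (simp add: \<phi>_def E_def w_def c_def power2_norm_eq_inner)
  show "let lam = sqrt m * r;
            v = (\<lambda>t. (1 / sqrt m) *\<^sub>R x' t);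
            C = f (x 0) - f xs + m / 2 * (norm ((1 / sqrt m) *\<^sub>R x' 0 + r *\<^sub>R (x 0 - xs)))\<^sup>2
        in antimono_on {0..} (\<lambda>t. exp (lam * t) *
               (f (x t) - f xs + m / 2 * (norm (v t + r *\<^sub>R (x t - xs)))\<^sup>2))
           \<and> (\<forall>t\<ge>0. f (x t) - f xs \<le> C * exp (- lam * t))"
    unfolding Let_def fe C
  proof (intro conjI allI impI)
    show "antimono_on {0..} \<phi>" unfolding monotone_on_def using anti by auto
  next
    fix t :: real assume t: "t \<ge> 0"
    have "\<phi> t \<le> \<phi> 0" using anti[of 0 t] t by simp
    hence "E t \<le> \<phi> 0 * exp (- (c*r*t))"
      unfolding \<phi>_def by (simp add: exp_minus field_simps)
    moreover have "f (x t) - f xs \<le> E t" unfolding E_def using m_pos by simp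
    ultimately show "f (x t) - f xs \<le> \<phi> 0 * exp (- (sqrt m * r) * t)"
      unfolding c_def by simp
  qed
qed

end
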